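(* Let $R=(\mathcal{F},\mathcal{V},\mathcal{R})$ with $\mathcal{R}=\{\ell_1\to r_1,\dots,\ell_n\to r_n\}$ and $R'=(\mathcal{F}',\mathcal{V}',\mathcal{R}')$ be TRSs with $R\cong_{\mathbf{SVE}}R'$, $R\cong_{\mathbf{LFE}}R'$ or $R\cong_{\mathbf{LE}}R'$, witnessed by the local isomorphism $\phi=(\phi_1,\dots,\phi_n)$, so $\mathcal{R}'=\{\phi_1(\ell_1)\to\phi_1(r_1),\dots,\phi_n(\ell_n)\to\phi_n(r_n)\}$. Then: (i) If $s\to_R t$ for $s,t\in T(\mathcal{F},\mathcal{V})$, then there is $1\le i\le n$ with $\phi_i(s)\to_{R'}\phi_i(t)$. However, there exist TRSs $R,R'$ with $R\cong_{\mathbf{LFE}}R'$ (hence also $R\cong_{\mathbf{SVE}}R'$ and $R\cong_{\mathbf{LE}}R'$), a witnessing family $\phi$, terms $s,t$ and an index $i$ such that $s\to_R t$ but not $\phi_i(s)\to_{R'}\phi_i(t)$. (ii) If $\phi_i(s)\to_{\{\phi_i(\ell_i)\to\phi_i(r_i)\}}\phi_i(t)$ for some $i$ and $s,t\in T(\mathcal{F},\mathcal{V})$, then $s\to_R t$. However, there exist TRSs $R,R'$ with $R\cong_{\mathbf{LFE}}R'$, a witnessing family $\phi$, terms $s,t$ and an index $j$ such that $\phi_j(s)\to_{R'}\phi_j(t)$ but not $s\to_R t$. (iii) There exist TRSs $R,R'$ with $R\cong_{\mathbf{LFE}}R'$ such that $R$ is terminating but $R'$ is not terminating.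
   Context: Terms and TRSs: $\mathcal{F}$ is a finite set of function symbols with arity map $\mathrm{ar}:\mathcal{F}\to\mathbb{N}_0$, $\mathcal{V}$ a finite set of variables disjoint from $\mathcal{F}$, and $T(\mathcal{F},\mathcal{V})$ the usual set of first-order terms over them. $\mathrm{Var}(t)$ is the set of variables occurring in $t$. A term rewriting system (TRS) is a triple $R=(\mathcal{F},\mathcal{V},\mathcal{R})$ where $\mathcal{R}$ is a finite set of rules $\ell\to r$ with $\ell,r\in T(\mathcal{F},\mathcal{V})$, $\ell\notin\mathcal{V}$ and $\mathrm{Var}(r)\subseteq\mathrm{Var}(\ell)$; $\mathcal{F}$ and $\mathcal{V}$ contain all symbols occurring in the rules. Rewriting: $s\to_R t$ iff there are a context $C$ (a term over $\mathcal{F},\mathcal{V}$ with one hole), a rule $\ell\to r\in\mathcal{R}$ and a substitution $\sigma:\mathcal{V}\to T(\mathcal{F},\mathcal{V})$ with $s=C[\sigma(\ell)]$ and $t=C[\sigma(r)]$; for a single rule set $\{\ell\to r\}$ the relation $\to_{\{\ell\to r\}}$ is defined likewise. $R$ is terminating if there is no infinite sequence of $\to_R$-steps. Term isomorphisms: a term isomorphism $\phi:T(\mathcal{F},\mathcal{V})\to T(\mathcal{F}',\mathcal{V}')$ is a pair of bijections $\phi_{\mathcal{F}}:\mathcal{F}\to\mathcal{F}'$ with $\mathrm{ar}'(\phi_{\mathcal{F}}(f))=\mathrm{ar}(f)$ for all $f$, and $\phi_{\mathcal{V}}:\mathcal{V}\to\mathcal{V}'$, extended homomorphically to terms. We write $\phi|_{\mathcal{F}}=\phi_{\mathcal{F}}$,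 $\phi|_{\mathcal{V}}=\phi_{\mathcal{V}}$. It is $\mathcal{V}$-invariant if $\mathcal{V}=\mathcal{V}'$ and $\phi_{\mathcal{V}}=\mathrm{id}$. Normal forms: two distinct rules $\ell\to r$, $\ell'\to r'$ of $\mathcal{R}$ are equivalent (resp. $\mathcal{F}$-equivalent) if there is a term isomorphism (resp. a $\mathcal{V}$-invariant one) $\phi:T(\mathcal{F},\mathcal{V})\to T(\mathcal{F},\mathcal{V})$ with $\phi(\ell)=\ell'$ and $\phi(r)=r'$. $R$ is in normal form (resp. $\mathcal{F}$-normal form) if $\mathcal{R}$ contains no pair of equivalent (resp. $\mathcal{F}$-equivalent) rules. TRS isomorphisms: a local isomorphism from $R$ to $R'$ is a family $(\phi_1,\dots,\phi_n)$ of term isomorphisms $T(\mathcal{F},\mathcal{V})\to T(\mathcal{F}',\mathcal{V}')$ with $\{\phi_i(\ell_i)\to\phi_i(r_i):1\le i\le n\}=\mathcal{R}'$. $R\cong_{\mathbf{LE}}R'$ if both are in normal form and a local isomorphism exists; $R\cong_{\mathbf{SVE}}R'$ if both are in $\mathcal{F}$-normal form and there is a local isomorphism with $\phi_1|_{\mathcal{V}}=\dots=\phi_n|_{\mathcal{V}}$; $R\cong_{\mathbf{LFE}}R'$ if both are in $\mathcal{F}$-normal form and there is a local isomorphism all of whose $\phi_i$ are $\mathcal{V}$-invariant. *)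

theory Defs
  imports Main
begin

datatype ('f, 'v) "term" = Var 'v | Fun 'f "('f, 'v) term list"

datatype ('f, 'v) ctxt =
  Hole | More 'f "('f, 'v) term list" "('f, 'v) ctxt" "('f, 'v) term list"

fun ctxt_apply :: "('f, 'v) ctxt \<Rightarrow> ('f, 'v) term \<Rightarrow> ('f, 'v) term" where
  "ctxt_apply Hole t = t"
| "ctxt_apply (More f ss C ts) t = Fun f (ss @ ctxt_apply C t # ts)"

fun subst_apply :: "('v \<Rightarrow> ('f, 'v) term) \<Rightarrow> ('f, 'v) term \<Rightarrow> ('f, 'v) term" where
  "subst_apply \<sigma> (Var x) = \<sigma> x"
| "subst_apply \<sigma> (Fun f ts) = Fun f (map (subst_apply \<sigma>) ts)"

fun vars_term :: "('f, 'v) term \<Rightarrow> 'v set" where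
  "vars_term (Var x) = {x}"
| "vars_term (Fun f ts) = (\<Union>t\<in>set ts. vars_term t)"

text \<open>Membership in T(F,V): well-formed terms over a signature F with arity map ar and
  a variable set V.\<close>
fun wf_term :: "'f set \<Rightarrow> ('f \<Rightarrow> nat) \<Rightarrow> 'v set \<Rightarrow> ('f, 'v) term \<Rightarrow> bool" where
  "wf_term F ar V (Var x) = (x \<in> V)"
| "wf_term F ar V (Fun f ts) = (f \<in> F \<and> length ts = ar f \<and> (\<forall>t\<in>set ts. wf_term F ar V t))"

fun wf_ctxt :: "'f set \<Rightarrow> ('f \<Rightarrow> nat) \<Rightarrow> 'v set \<Rightarrow> ('f, 'v) ctxt \<Rightarrow> bool" where
  "wf_ctxt F ar V Hole = True"
| "wf_ctxt F ar V (More f ss C ts) =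
     (f \<in> F \<and> ar f = length ss + 1 + length ts \<and> (\<forall>t\<in>set ss. wf_term F ar V t)
      \<and> wf_ctxt F ar V C \<and> (\<forall>t\<in>set ts. wf_term F ar V t))"

text \<open>A TRS (F, V, R) together with the arity map: (F, ar, V, R).\<close>
type_synonym ('f, 'v) rule = "('f, 'v) term \<times> ('f, 'v) term"
type_synonym ('f, 'v) trs = "'f set \<times> ('f \<Rightarrow> nat) \<times> 'v set \<times> ('f, 'v) rule set"

definition funs :: "('f, 'v) trs \<Rightarrow> 'f set" where "funs R = fst R"
definition arity :: "('f, 'v) trs \<Rightarrow> 'f \<Rightarrow> nat" where "arity R = fst (snd R)"
definition vars :: "('f, 'v) trs \<Rightarrow> 'v set" where "vars R = fst (snd (snd R))"
definition rules :: "('f, 'v) trs \<Rightarrow> ('f, 'v) rule set" where "rules R = snd (snd (snd R))"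

definition is_trs :: "('f, 'v) trs \<Rightarrow> bool" where
  "is_trs R \<longleftrightarrow> finite (funs R) \<and> finite (vars R) \<and> finite (rules R) \<and>
     (\<forall>(l, r) \<in> rules R. wf_term (funs R) (arity R) (vars R) l \<and>
                         wf_term (funs R) (arity R) (vars R) r \<and>
                         (\<forall>x. l \<noteq> Var x) \<and> vars_term r \<subseteq> vars_term l)"

abbreviation in_terms :: "('f, 'v) term \<Rightarrow> ('f, 'v) trs \<Rightarrow> bool" where
  "in_terms t R \<equiv> wf_term (funs R) (arity R) (vars R) t"

definition rstep_rules ::
  "'f set \<Rightarrow> ('f \<Rightarrow> nat) \<Rightarrow> 'v set \<Rightarrow> ('f, 'v) rule set \<Rightarrow> ('f, 'v) term \<Rightarrow> ('f, 'v) term \<Rightarrow> bool" where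
  "rstep_rules F ar V Rs s t \<longleftrightarrow>
     (\<exists>C l r \<sigma>. wf_ctxt F ar V C \<and> (l, r) \<in> Rs \<and> (\<forall>x\<in>V. wf_term F ar V (\<sigma> x)) \<and>
        s = ctxt_apply C (subst_apply \<sigma> l) \<and> t = ctxt_apply C (subst_apply \<sigma> r))"

definition rstep :: "('f, 'v) trs \<Rightarrow> ('f, 'v) term \<Rightarrow> ('f, 'v) term \<Rightarrow> bool" where
  "rstep R s t \<longleftrightarrow> rstep_rules (funs R) (arity R) (vars R) (rules R) s t"

definition terminating :: "('f, 'v) trs \<Rightarrow> bool" where
  "terminating R \<longleftrightarrow> \<not> (\<exists>seq :: nat \<Rightarrow> ('f, 'v) term. \<forall>k. rstep R (seq k) (seq (Suc k)))"

text \<open>A term isomorphism T(F,V) -> T(F',V') is given by a pair (phiF, phiV) of bijections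
  phiF : F -> F' (arity preserving) and phiV : V -> V', extended homomorphically via map_term.\<close>
type_synonym ('f, 'v, 'g, 'w) tiso = "('f \<Rightarrow> 'g) \<times> ('v \<Rightarrow> 'w)"

definition term_iso ::
  "'f set \<Rightarrow> ('f \<Rightarrow> nat) \<Rightarrow> 'v set \<Rightarrow> 'g set \<Rightarrow> ('g \<Rightarrow> nat) \<Rightarrow> 'w set \<Rightarrow> ('f, 'v, 'g, 'w) tiso \<Rightarrow> bool" where
  "term_iso F ar V F' ar' V' \<phi> \<longleftrightarrow>
     bij_betw (fst \<phi>) F F' \<and> (\<forall>f\<in>F. ar' (fst \<phi> f) = ar f) \<and> bij_betw (snd \<phi>) V V'"

definition apply_iso :: "('f, 'v, 'g, 'w) tiso \<Rightarrow> ('f, 'v) term \<Rightarrow> ('g, 'w) term" where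
  "apply_iso \<phi> t = map_term (fst \<phi>) (snd \<phi>) t"

definition V_invariant :: "'v set \<Rightarrow> 'v set \<Rightarrow> ('f, 'v, 'g, 'v) tiso \<Rightarrow> bool" where
  "V_invariant V V' \<phi> \<longleftrightarrow> V = V' \<and> (\<forall>x\<in>V. snd \<phi> x = x)"

definition equivalent_rules :: "('f, 'v) trs \<Rightarrow> ('f, 'v) rule \<Rightarrow> ('f, 'v) rule \<Rightarrow> bool" where
  "equivalent_rules R \<rho> \<rho>' \<longleftrightarrow> \<rho> \<noteq> \<rho>' \<and>
     (\<exists>\<phi>. term_iso (funs R) (arity R) (vars R) (funs R) (arity R) (vars R) \<phi> \<and>
          apply_iso \<phi> (fst \<rho>) = fst \<rho>' \<and> apply_iso \<phi> (snd \<rho>) = snd \<rho>')"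

definition F_equivalent_rules :: "('f, 'v) trs \<Rightarrow> ('f, 'v) rule \<Rightarrow> ('f, 'v) rule \<Rightarrow> bool" where
  "F_equivalent_rules R \<rho> \<rho>' \<longleftrightarrow> \<rho> \<noteq> \<rho>' \<and>
     (\<exists>\<phi>. term_iso (funs R) (arity R) (vars R) (funs R) (arity R) (vars R) \<phi> \<and>
          V_invariant (vars R) (vars R) \<phi> \<and>
          apply_iso \<phi> (fst \<rho>) = fst \<rho>' \<and> apply_iso \<phi> (snd \<rho>) = snd \<rho>')"

definition normal_form :: "('f, 'v) trs \<Rightarrow> bool" where
  "normal_form R \<longleftrightarrow> \<not> (\<exists>\<rho>\<in>rules R. \<exists>\<rho>'\<in>rules R. equivalent_rules R \<rho> \<rho>')"

definition F_normal_form :: "('f, 'v) trs \<Rightarrow> bool" where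
  "F_normal_form R \<longleftrightarrow> \<not> (\<exists>\<rho>\<in>rules R. \<exists>\<rho>'\<in>rules R. F_equivalent_rules R \<rho> \<rho>')"

text \<open>rs enumerates the rules of R as l_1 -> r_1, ..., l_n -> r_n (rs ! (i-1) = (l_i, r_i));
  phis ! (i-1) is phi_i.\<close>
definition enumerates :: "('f, 'v) trs \<Rightarrow> ('f, 'v) rule list \<Rightarrow> bool" where
  "enumerates R rs \<longleftrightarrow> distinct rs \<and> set rs = rules R"

definition local_iso ::
  "('f, 'v) trs \<Rightarrow> ('g, 'w) trs \<Rightarrow> ('f, 'v) rule list \<Rightarrow> ('f, 'v, 'g, 'w) tiso list \<Rightarrow> bool" where
  "local_iso R R' rs phis \<longleftrightarrow> enumerates R rs \<and> length phis = length rs \<and>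
     (\<forall>i < length rs. term_iso (funs R) (arity R) (vars R) (funs R') (arity R') (vars R') (phis ! i)) \<and>
     {(apply_iso (phis ! i) (fst (rs ! i)), apply_iso (phis ! i) (snd (rs ! i))) | i. i < length rs}
       = rules R'"

definition iso_LE_via ::
  "('f, 'v) trs \<Rightarrow> ('g, 'w) trs \<Rightarrow> ('f, 'v) rule list \<Rightarrow> ('f, 'v, 'g, 'w) tiso list \<Rightarrow> bool" where
  "iso_LE_via R R' rs phis \<longleftrightarrow> normal_form R \<and> normal_form R' \<and> local_iso R R' rs phis"

definition iso_SVE_via ::
  "('f, 'v) trs \<Rightarrow> ('g, 'w) trs \<Rightarrow> ('f, 'v) rule list \<Rightarrow> ('f, 'v, 'g, 'w) tiso list \<Rightarrow> bool" where
  "iso_SVE_via R R' rs phis \<longleftrightarrow> F_normal_form R \<and> F_normal_form R' \<and> local_iso R R' rs phis \<and>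
     (\<forall>i < length phis. \<forall>j < length phis. \<forall>x \<in> vars R. snd (phis ! i) x = snd (phis ! j) x)"

definition iso_LFE_via ::
  "('f, 'v) trs \<Rightarrow> ('g, 'v) trs \<Rightarrow> ('f, 'v) rule list \<Rightarrow> ('f, 'v, 'g, 'v) tiso list \<Rightarrow> bool" where
  "iso_LFE_via R R' rs phis \<longleftrightarrow> F_normal_form R \<and> F_normal_form R' \<and> local_iso R R' rs phis \<and>
     (\<forall>i < length phis. V_invariant (vars R) (vars R') (phis ! i))"

definition iso_LFE :: "('f, 'v) trs \<Rightarrow> ('g, 'v) trs \<Rightarrow> bool" where
  "iso_LFE R R' \<longleftrightarrow> (\<exists>rs phis. iso_LFE_via R R' rs phis)"

definition transfer_i ::
  "('f, 'v) trs \<Rightarrow> ('g, 'w) trs \<Rightarrow> ('f, 'v) rule list \<Rightarrow> ('f, 'v, 'g, 'w) tiso list \<Rightarrow> bool" where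
  "transfer_i R R' rs phis \<longleftrightarrow>
     (\<forall>s t. in_terms s R \<longrightarrow> in_terms t R \<longrightarrow> rstep R s t \<longrightarrow>
        (\<exists>i < length rs. rstep R' (apply_iso (phis ! i) s) (apply_iso (phis ! i) t)))"

definition transfer_ii ::
  "('f, 'v) trs \<Rightarrow> ('g, 'w) trs \<Rightarrow> ('f, 'v) rule list \<Rightarrow> ('f, 'v, 'g, 'w) tiso list \<Rightarrow> bool" where
  "transfer_ii R R' rs phis \<longleftrightarrow>
     (\<forall>s t i. in_terms s R \<longrightarrow> in_terms t R \<longrightarrow> i < length rs \<longrightarrow>
        rstep_rules (funs R') (arity R') (vars R')
          {(apply_iso (phis ! i) (fst (rs ! i)), apply_iso (phis ! i) (snd (rs ! i)))}
          (apply_iso (phis ! i) s) (apply_iso (phis ! i) t)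
        \<longrightarrow> rstep R s t)"

end

theory Submission
  imports Defs
begin



lemma map_ctxt_apply: "map_term f g (ctxt_apply C t) = ctxt_apply (map_ctxt f g C) (map_term f g t)"
  by (induction C) auto

lemma vars_map: "vars_term (map_term f g t) = g ` vars_term t"
  by (induction t) auto

lemma wf_vars: "wf_term F ar V t \<Longrightarrow> vars_term t \<subseteq> V"
  by (induction t) auto

lemma subst_map:
  "(\<forall>x\<in>vars_term t. \<tau> (g x) = map_term f g (\<sigma> x)) \<Longrightarrow>
   subst_apply \<tau> (map_term f g t) = map_term f g (subst_apply \<sigma> t)"
  by (induction t) auto

lemma wf_map:
  assumes "term_iso F ar V F' ar' V' \<phi>"
  shows "wf_term F ar V t \<Longrightarrow> wf_term F' ar' V' (map_term (fst \<phi>) (snd \<phi>) t)"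
  using assms unfolding term_iso_def
  by (induction t) (auto simp: bij_betw_apply)

lemma wf_ctxt_map:
  assumes "term_iso F ar V F' ar' V' \<phi>"
  shows "wf_ctxt F ar V C \<Longrightarrow> wf_ctxt F' ar' V' (map_ctxt (fst \<phi>) (snd \<phi>) C)"
  using assms wf_map[OF assms]
  by (induction C) (auto simp: term_iso_def bij_betw_apply)

lemma map_inv:
  assumes "inj_on f F" "inj_on g V"
  shows "wf_term F ar V t \<Longrightarrow> map_term (inv_into F f) (inv_into V g) (map_term f g t) = t"
  using assms by (induction t) (simp_all add: map_idI list.map_ident_strong)

lemma iso_inv:
  assumes "term_iso F ar V F' ar' V' \<phi>"
  shows "term_iso F' ar' V' F ar V (inv_into F (fst \<phi>), inv_into V (snd \<phi>))"
proof -
  have b1: "bij_betw (fst \<phi>) F F'" and a: "\<forall>f\<in>F. ar' (fst \<phi> f) = ar f" and b2: "bij_betw (snd \<phi>) V V'"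
    using assms unfolding term_iso_def by auto
  have "\<forall>f\<in>F'. ar (inv_into F (fst \<phi>) f) = ar' f"
  proof
    fix f assume f: "f \<in> F'"
    have "inv_into F (fst \<phi>) f \<in> F" using f b1 by (metis bij_betw_def inv_into_into)
    moreover have "fst \<phi> (inv_into F (fst \<phi>) f) = f" using f b1 by (metis bij_betw_def f_inv_into_f)
    ultimately show "ar (inv_into F (fst \<phi>) f) = ar' f" using a by metis
  qed
  then show ?thesis unfolding term_iso_def using b1 b2 by (simp add: bij_betw_inv_into)
qed


lemma transfer_i_gen:
  assumes trs: "is_trs R" and li: "local_iso R R' rs phis"
  shows "transfer_i R R' rs phis"
  unfolding transfer_i_def
proof (intro allI impI)
  fix s t assume "rstep R s t"
  then obtain C l r \<sigma> where C: "wf_ctxt (funs R) (arity R) (vars R) C" and lr: "(l, r) \<in> rules R"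
    and \<sigma>: "\<forall>x\<in>vars R. wf_term (funs R) (arity R) (vars R) (\<sigma> x)"
    and s: "s = ctxt_apply C (subst_apply \<sigma> l)" and t: "t = ctxt_apply C (subst_apply \<sigma> r)"
    unfolding rstep_def rstep_rules_def by blast
  from li have en: "set rs = rules R" and len: "length phis = length rs"
    and isos: "\<forall>i<length rs. term_iso (funs R) (arity R) (vars R) (funs R') (arity R') (vars R') (phis ! i)"
    and rr: "{(apply_iso (phis ! i) (fst (rs ! i)), apply_iso (phis ! i) (snd (rs ! i))) | i. i < length rs} = rules R'"
    unfolding local_iso_def enumerates_def by auto
  obtain k where k: "k < length rs" "rs ! k = (l, r)" using lr en by (metis in_set_conv_nth)
  define \<phi> where "\<phi> = phis ! k"
  have iso: "term_iso (funs R) (arity R) (vars R) (funs R') (arity R') (vars R') \<phi>" using isos k \<phi>_def by auto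
  hence bf: "bij_betw (fst \<phi>) (funs R) (funs R')" and bv: "bij_betw (snd \<phi>) (vars R) (vars R')"
    unfolding term_iso_def by auto
  have wl: "wf_term (funs R) (arity R) (vars R) l" and wr: "wf_term (funs R) (arity R) (vars R) r"
    using trs lr unfolding is_trs_def by auto
  define \<tau> where "\<tau> y = apply_iso \<phi> (\<sigma> (inv_into (vars R) (snd \<phi>) y))" for y
  have \<tau>: "\<forall>x\<in>vars R. \<tau> (snd \<phi> x) = map_term (fst \<phi>) (snd \<phi>) (\<sigma> x)"
    using bv unfolding \<tau>_def apply_iso_def by (simp add: bij_betw_def)
  have \<tau>wf: "\<forall>y\<in>vars R'. wf_term (funs R') (arity R') (vars R') (\<tau> y)"
  proof
    fix y assume "y \<in> vars R'"
    hence "inv_into (vars R) (snd \<phi>) y \<in> vars R" using bv by (metis bij_betw_def inv_into_into)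
    thus "wf_term (funs R') (arity R') (vars R') (\<tau> y)"
      unfolding \<tau>_def apply_iso_def using wf_map[OF iso] \<sigma> by blast
  qed
  have rule': "(apply_iso \<phi> l, apply_iso \<phi> r) \<in> rules R'" using rr k \<phi>_def by force
  have "rstep R' (apply_iso \<phi> s) (apply_iso \<phi> t)"
    unfolding rstep_def rstep_rules_def
  proof (intro exI conjI)
    show "wf_ctxt (funs R') (arity R') (vars R') (map_ctxt (fst \<phi>) (snd \<phi>) C)"
      using wf_ctxt_map[OF iso C] .
    show "(apply_iso \<phi> l, apply_iso \<phi> r) \<in> rules R'" by (rule rule')
    show "\<forall>x\<in>vars R'. wf_term (funs R') (arity R') (vars R') (\<tau> x)" by (rule \<tau>wf)
    have "subst_apply \<tau> (map_term (fst \<phi>) (snd \<phi>) l) = map_term (fst \<phi>) (snd \<phi>) (subst_apply \<sigma> l)"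
      using \<tau> wf_vars[OF wl] by (intro subst_map) blast
    then show "apply_iso \<phi> s = ctxt_apply (map_ctxt (fst \<phi>) (snd \<phi>) C) (subst_apply \<tau> (apply_iso \<phi> l))"
      by (simp add: s apply_iso_def map_ctxt_apply)
    have "subst_apply \<tau> (map_term (fst \<phi>) (snd \<phi>) r) = map_term (fst \<phi>) (snd \<phi>) (subst_apply \<sigma> r)"
      using \<tau> wf_vars[OF wr] by (intro subst_map) blast
    then show "apply_iso \<phi> t = ctxt_apply (map_ctxt (fst \<phi>) (snd \<phi>) C) (subst_apply \<tau> (apply_iso \<phi> r))"
      by (simp add: t apply_iso_def map_ctxt_apply)
  qed
  thus "\<exists>i<length rs. rstep R' (apply_iso (phis ! i) s) (apply_iso (phis ! i) t)"
    using k \<phi>_def by blast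
qed

lemma transfer_ii_gen:
  assumes trs: "is_trs R" and li: "local_iso R R' rs phis"
  shows "transfer_ii R R' rs phis"
  unfolding transfer_ii_def
proof (intro allI impI)
  fix s t i
  assume ws: "wf_term (funs R) (arity R) (vars R) s" and wt: "wf_term (funs R) (arity R) (vars R) t"
    and i: "i < length rs"
  define \<phi> where "\<phi> = phis ! i"
  obtain l r where lr: "rs ! i = (l, r)" by fastforce
  assume "rstep_rules (funs R') (arity R') (vars R')
          {(apply_iso (phis ! i) (fst (rs ! i)), apply_iso (phis ! i) (snd (rs ! i)))}
          (apply_iso (phis ! i) s) (apply_iso (phis ! i) t)"
  then obtain C \<sigma> where C: "wf_ctxt (funs R') (arity R') (vars R') C"
    and \<sigma>: "\<forall>x\<in>vars R'. wf_term (funs R') (arity R') (vars R') (\<sigma> x)"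
    and s: "apply_iso \<phi> s = ctxt_apply C (subst_apply \<sigma> (apply_iso \<phi> l))"
    and t: "apply_iso \<phi> t = ctxt_apply C (subst_apply \<sigma> (apply_iso \<phi> r))"
    unfolding rstep_rules_def \<phi>_def lr by auto
  from li have en: "set rs = rules R"
    and isos: "\<forall>i<length rs. term_iso (funs R) (arity R) (vars R) (funs R') (arity R') (vars R') (phis ! i)"
    unfolding local_iso_def enumerates_def by auto
  have lrR: "(l, r) \<in> rules R" using en i lr by (metis nth_mem)
  have iso: "term_iso (funs R) (arity R) (vars R) (funs R') (arity R') (vars R') \<phi>" using isos i \<phi>_def by auto
  hence bf: "bij_betw (fst \<phi>) (funs R) (funs R')" and bv: "bij_betw (snd \<phi>) (vars R) (vars R')"
    unfolding term_iso_def by auto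
  define ps where "ps = (inv_into (funs R) (fst \<phi>), inv_into (vars R) (snd \<phi>))"
  have iso': "term_iso (funs R') (arity R') (vars R') (funs R) (arity R) (vars R) ps"
    unfolding ps_def by (rule iso_inv[OF iso])
  have bk: "\<And>u. wf_term (funs R) (arity R) (vars R) u \<Longrightarrow> map_term (fst ps) (snd ps) (apply_iso \<phi> u) = u"
    unfolding ps_def apply_iso_def using map_inv bf bv by (simp add: bij_betw_def map_inv)
  have wl: "wf_term (funs R) (arity R) (vars R) l" and wr: "wf_term (funs R) (arity R) (vars R) r"
    using trs lrR unfolding is_trs_def by auto
  define \<tau> where "\<tau> x = map_term (fst ps) (snd ps) (\<sigma> (snd \<phi> x))" for x
  have key: "\<And>u. wf_term (funs R) (arity R) (vars R) u \<Longrightarrow>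
     map_term (fst ps) (snd ps) (subst_apply \<sigma> (apply_iso \<phi> u)) = subst_apply \<tau> u"
  proof -
    fix u assume wu: "wf_term (funs R) (arity R) (vars R) u"
    have "\<forall>x\<in>vars_term (apply_iso \<phi> u). \<tau> (snd ps x) = map_term (fst ps) (snd ps) (\<sigma> x)"
    proof
      fix x assume "x \<in> vars_term (apply_iso \<phi> u)"
      hence "x \<in> snd \<phi> ` vars R" using wf_vars[OF wu] unfolding apply_iso_def vars_map by auto
      hence "snd \<phi> (snd ps x) = x" unfolding ps_def by (simp add: f_inv_into_f)
      thus "\<tau> (snd ps x) = map_term (fst ps) (snd ps) (\<sigma> x)" unfolding \<tau>_def by simp
    qed
    from subst_map[OF this] bk[OF wu] show "map_term (fst ps) (snd ps) (subst_apply \<sigma> (apply_iso \<phi> u)) = subst_apply \<tau> u"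
      by simp
  qed
  show "rstep R s t"
    unfolding rstep_def rstep_rules_def
  proof (intro exI conjI)
    show "wf_ctxt (funs R) (arity R) (vars R) (map_ctxt (fst ps) (snd ps) C)"
      using wf_ctxt_map[OF iso' C] .
    show "(l, r) \<in> rules R" by (rule lrR)
    show "\<forall>x\<in>vars R. wf_term (funs R) (arity R) (vars R) (\<tau> x)"
      unfolding \<tau>_def using \<sigma> wf_map[OF iso'] bv by (simp add: bij_betw_apply)
    show "s = ctxt_apply (map_ctxt (fst ps) (snd ps) C) (subst_apply \<tau> l)"
      using arg_cong[OF s, of "map_term (fst ps) (snd ps)"] bk[OF ws] key[OF wl]
      by (simp add: map_ctxt_apply)
    show "t = ctxt_apply (map_ctxt (fst ps) (snd ps) C) (subst_apply \<tau> r)"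
      using arg_cong[OF t, of "map_term (fst ps) (snd ps)"] bk[OF wt] key[OF wr]
      by (simp add: map_ctxt_apply)
  qed
qed


definition "ca = (Fun (0::nat) [] :: (nat, nat) term)"
definition "cb = (Fun (1::nat) [] :: (nat, nat) term)"
definition "cfb = (Fun (2::nat) [cb] :: (nat, nat) term)"
definition "ar0 = (\<lambda>n::nat. if n = 2 then 1 else 0::nat)"
definition "Q0 = ({0,1,2::nat}, ar0, {}::nat set, {(ca, cfb), (ca, cb)})"
definition "Q1 = ({0,1,2::nat}, ar0, {}::nat set, {(ca, cfb), (cb, ca)})"
definition "sw = (\<lambda>n::nat. if n = 0 then 1 else if n = 1 then 0 else n)"
definition "rs0 = [(ca, cfb), (ca, cb)]"
definition phis0 :: "(nat, nat, nat, nat) tiso list" where "phis0 = [(id, id), (sw, id)]"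

lemmas cdefs = ca_def cb_def cfb_def ar0_def Q0_def Q1_def funs_def arity_def vars_def rules_def

lemma trsQ0: "is_trs Q0" by (simp add: is_trs_def cdefs)
lemma trsQ1: "is_trs Q1" by (simp add: is_trs_def cdefs)

lemma nfQ0: "F_normal_form Q0"
  by (auto simp: F_normal_form_def F_equivalent_rules_def cdefs apply_iso_def)
lemma nfQ1: "F_normal_form Q1"
  by (auto simp: F_normal_form_def F_equivalent_rules_def cdefs apply_iso_def)

lemma set2: "{f i | i. i < Suc (Suc 0)} = {f 0, f (Suc 0)}"
  by (auto simp: less_Suc_eq)

lemma iso_id: "term_iso {0,1,2} ar0 {} {0,1,2} ar0 {} (id, id)"
  by (simp add: term_iso_def)
lemma iso_sw: "term_iso {0,1,2} ar0 {} {0,1,2} ar0 {} (sw, id)"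
  by (auto simp: term_iso_def sw_def ar0_def bij_betw_def inj_on_def)

lemma liQ: "local_iso Q0 Q1 rs0 phis0"
  unfolding local_iso_def enumerates_def
proof (intro conjI)
  show "distinct rs0" by (simp add: rs0_def cdefs)
  show "set rs0 = rules Q0" by (auto simp: rs0_def cdefs)
  show "length phis0 = length rs0" by (simp add: rs0_def phis0_def)
  show "\<forall>i<length rs0. term_iso (funs Q0) (arity Q0) (vars Q0) (funs Q1) (arity Q1) (vars Q1) (phis0 ! i)"
    using iso_id iso_sw by (auto simp: rs0_def phis0_def less_Suc_eq Q0_def Q1_def funs_def arity_def vars_def)
  have L: "length rs0 = Suc (Suc 0)" by (simp add: rs0_def)
  show "{(apply_iso (phis0 ! i) (fst (rs0 ! i)), apply_iso (phis0 ! i) (snd (rs0 ! i))) | i. i < length rs0} = rules Q1"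
    unfolding L set2
    by (auto simp: rs0_def cdefs apply_iso_def phis0_def sw_def term.map_id)
qed

lemma lfeQ: "iso_LFE_via Q0 Q1 rs0 phis0"
  using nfQ0 nfQ1 liQ by (simp add: iso_LFE_via_def V_invariant_def Q0_def Q1_def vars_def)

lemma ctx_const: "(Fun f [] = ctxt_apply C t) = (C = Hole \<and> t = Fun f [])"
  by (cases C) auto

lemma ab_Q0: "rstep Q0 ca cb"
  unfolding rstep_def rstep_rules_def
  by (rule exI[of _ Hole], rule exI[of _ ca], rule exI[of _ cb], rule exI[of _ Var]) (simp add: cdefs)
lemma ba_Q1: "rstep Q1 cb ca"
  unfolding rstep_def rstep_rules_def
  by (rule exI[of _ Hole], rule exI[of _ cb], rule exI[of _ ca], rule exI[of _ Var]) (simp add: cdefs)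
lemma not_ab_Q1: "\<not> rstep Q1 ca cb"
  unfolding rstep_def rstep_rules_def
  by (auto simp: cdefs ctx_const)
lemma not_ba_Q0: "\<not> rstep Q0 cb ca"
  unfolding rstep_def rstep_rules_def
  by (auto simp: cdefs ctx_const)

fun cnt :: "(nat, nat) term \<Rightarrow> nat" where
  "cnt (Var x) = 0"
| "cnt (Fun f ts) = (if f = 0 then 1 else 0) + sum_list (map cnt ts)"

lemma cnt_ctxt: "cnt t' < cnt t \<Longrightarrow> cnt (ctxt_apply C t') < cnt (ctxt_apply C t)"
  by (induction C) auto

lemma step_dec: "rstep Q0 s t \<Longrightarrow> cnt t < cnt s"
  unfolding rstep_def rstep_rules_def
  by (auto simp: cdefs intro!: cnt_ctxt)

lemma termQ0: "terminating Q0"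
  unfolding terminating_def
proof
  assume "\<exists>seq :: nat \<Rightarrow> (nat, nat) term. \<forall>k. rstep Q0 (seq k) (seq (Suc k))"
  then obtain seq :: "nat \<Rightarrow> (nat, nat) term" where h: "\<forall>k. rstep Q0 (seq k) (seq (Suc k))" by blast
  have "cnt (seq k) + k \<le> cnt (seq 0)" for k
  proof (induction k)
    case (Suc k) then show ?case using step_dec[OF h[rule_format, of k]] by simp
  qed simp
  from this[of "Suc (cnt (seq 0))"] show False by simp
qed

fun fctx :: "nat \<Rightarrow> (nat, nat) ctxt" where
  "fctx 0 = Hole"
| "fctx (Suc n) = More 2 [] (fctx n) []"

lemma fctx_wf: "wf_ctxt {0,1,2} ar0 {} (fctx n)"
  by (induction n) (auto simp: ar0_def)

lemma fctx_wf': "wf_ctxt {0, Suc 0, 2} (\<lambda>n. if n = 2 then 1 else 0) {} (fctx n)"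
  by (induction n) auto

lemma fctx_Suc: "ctxt_apply (fctx (Suc m)) t = ctxt_apply (fctx m) (Fun 2 [t])"
  by (induction m) auto

lemma fctx_Suc': "Fun 2 [ctxt_apply (fctx m) t] = ctxt_apply (fctx m) (Fun 2 [t])"
  using fctx_Suc[of m t] by simp

lemma nontermQ1: "\<not> terminating Q1"
  unfolding terminating_def
proof -
  define seq where "seq k = ctxt_apply (fctx (k div 2)) (if even k then cb else ca)" for k
  have "rstep Q1 (seq k) (seq (Suc k))" for k
  proof (cases "even k")
    case True
    then have "seq k = ctxt_apply (fctx (k div 2)) cb" "seq (Suc k) = ctxt_apply (fctx (k div 2)) ca"
      by (auto simp: seq_def)
    then show ?thesis unfolding rstep_def rstep_rules_def
      apply -
      by (rule exI[of _ "fctx (k div 2)"], rule exI[of _ cb], rule exI[of _ ca], rule exI[of _ Var])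
         (simp add: cdefs fctx_wf')
  next
    case False
    then have "seq k = ctxt_apply (fctx (k div 2)) ca" "seq (Suc k) = ctxt_apply (fctx (k div 2)) cfb"
      by (auto simp: seq_def fctx_Suc' cfb_def elim!: oddE)
    then show ?thesis unfolding rstep_def rstep_rules_def
      apply -
      by (rule exI[of _ "fctx (k div 2)"], rule exI[of _ ca], rule exI[of _ cfb], rule exI[of _ Var])
         (simp add: cdefs fctx_wf')
  qed
  then show "\<not> \<not> (\<exists>seq :: nat \<Rightarrow> (nat, nat) term. \<forall>k. rstep Q1 (seq k) (seq (Suc k)))" by blast
qed


theorem mainTheorem6:
  fixes R :: "('f, 'v) trs" and R1 :: "('g, 'w) trs" and R2 :: "('g, 'v) trs"
  shows
    \<comment> \<open>(i) and (ii), positive parts, for each of the three notions\<close>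
    "(\<forall>rs phis. is_trs R \<and> is_trs R1 \<and> (iso_LE_via R R1 rs phis \<or> iso_SVE_via R R1 rs phis)
        \<longrightarrow> transfer_i R R1 rs phis \<and> transfer_ii R R1 rs phis)
   \<and> (\<forall>rs phis. is_trs R \<and> is_trs R2 \<and> iso_LFE_via R R2 rs phis
        \<longrightarrow> transfer_i R R2 rs phis \<and> transfer_ii R R2 rs phis)
   \<and> \<comment> \<open>(i), counterexample\<close>
     (\<exists>(Q :: (nat, nat) trs) (Q' :: (nat, nat) trs) rs phis s t i.
        is_trs Q \<and> is_trs Q' \<and> iso_LFE_via Q Q' rs phis \<and>
        in_terms s Q \<and> in_terms t Q \<and> i < length rs \<and>
        rstep Q s t \<and> \<not> rstep Q' (apply_iso (phis ! i) s) (apply_iso (phis ! i) t))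
   \<and> \<comment> \<open>(ii), counterexample\<close>
     (\<exists>(Q :: (nat, nat) trs) (Q' :: (nat, nat) trs) rs phis s t j.
        is_trs Q \<and> is_trs Q' \<and> iso_LFE_via Q Q' rs phis \<and>
        in_terms s Q \<and> in_terms t Q \<and> j < length rs \<and>
        rstep Q' (apply_iso (phis ! j) s) (apply_iso (phis ! j) t) \<and> \<not> rstep Q s t)
   \<and> \<comment> \<open>(iii)\<close>
     (\<exists>(Q :: (nat, nat) trs) (Q' :: (nat, nat) trs).
        is_trs Q \<and> is_trs Q' \<and> iso_LFE Q Q' \<and> terminating Q \<and> \<not> terminating Q')"
  proof (intro conjI allI impI)
  fix rs phis
  assume h: "is_trs R \<and> is_trs R1 \<and> (iso_LE_via R R1 rs phis \<or> iso_SVE_via R R1 rs phis)"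
  hence li: "local_iso R R1 rs phis" by (auto simp: iso_LE_via_def iso_SVE_via_def)
  show "transfer_i R R1 rs phis" using h li transfer_i_gen by blast
  show "transfer_ii R R1 rs phis" using h li transfer_ii_gen by blast
next
  fix rs phis
  assume h: "is_trs R \<and> is_trs R2 \<and> iso_LFE_via R R2 rs phis"
  hence li: "local_iso R R2 rs phis" by (auto simp: iso_LFE_via_def)
  show "transfer_i R R2 rs phis" using h li transfer_i_gen by blast
  show "transfer_ii R R2 rs phis" using h li transfer_ii_gen by blast
next
  have w: "in_terms ca Q0" "in_terms cb Q0" by (simp_all add: cdefs)
  have "apply_iso (phis0 ! 0) ca = ca" "apply_iso (phis0 ! 0) cb = cb"
    by (simp_all add: phis0_def apply_iso_def term.map_id)
  moreover have "0 < length rs0" by (simp add: rs0_def)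
  ultimately show "\<exists>(Q :: (nat, nat) trs) (Q' :: (nat, nat) trs) rs phis s t i.
        is_trs Q \<and> is_trs Q' \<and> iso_LFE_via Q Q' rs phis \<and>
        in_terms s Q \<and> in_terms t Q \<and> i < length rs \<and>
        rstep Q s t \<and> \<not> rstep Q' (apply_iso (phis ! i) s) (apply_iso (phis ! i) t)"
    using trsQ0 trsQ1 lfeQ w ab_Q0 not_ab_Q1 by metis
next
  have w: "in_terms ca Q0" "in_terms cb Q0" by (simp_all add: cdefs)
  have "apply_iso (phis0 ! 0) ca = ca" "apply_iso (phis0 ! 0) cb = cb"
    by (simp_all add: phis0_def apply_iso_def term.map_id)
  moreover have "0 < length rs0" by (simp add: rs0_def)
  ultimately show "\<exists>(Q :: (nat, nat) trs) (Q' :: (nat, nat) trs) rs phis s t j.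
        is_trs Q \<and> is_trs Q' \<and> iso_LFE_via Q Q' rs phis \<and>
        in_terms s Q \<and> in_terms t Q \<and> j < length rs \<and>
        rstep Q' (apply_iso (phis ! j) s) (apply_iso (phis ! j) t) \<and> \<not> rstep Q s t"
    using trsQ0 trsQ1 lfeQ w ba_Q1 not_ba_Q0 by metis
next
  show "\<exists>(Q :: (nat, nat) trs) (Q' :: (nat, nat) trs).
        is_trs Q \<and> is_trs Q' \<and> iso_LFE Q Q' \<and> terminating Q \<and> \<not> terminating Q'"
    using trsQ0 trsQ1 lfeQ termQ0 nontermQ1 unfolding iso_LFE_def by blast
qed

end
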